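(* Let $f:\mathbb{R}^n\to\mathbb{R}$ be differentiable with $L_f$-Lipschitz continuous gradient, let $g:\mathbb{R}^n\to\mathbb{R}\cup\{+\infty\}$ be proper, lower semicontinuous, $\gamma_g$-prox-bounded and $\rho$-weakly convex, let $\varphi=f+g$ with $\operatorname{argmin}\varphi\neq\emptyset$. For the iterates generated by the PGCL algorithm described in the context: (i) $r^k\to0$ and $\sum_k\|r^k\|^2<\infty$, and $\omega((x^k))=\omega((\bar x^k))\subseteq\operatorname{fix}T_\gamma$; (ii) $(\varphi_\gamma(x^k))$ converges to a finite value $\varphi_\star$, and if $(x^k)$ is bounded then $(\varphi(\bar x^k))$ also converges to $\varphi_\star$.
   Context: $\omega(\cdot)$ denotes the set of limit points of a sequence; $\operatorname{fix}T_\gamma=\{x:x\in T_\gamma(x)\}$. $\gamma_g$-prox-bounded: $g+\frac1{2\gamma}\|\cdot\|^2$ bounded below for each $\gamma\in(0,\gamma_g)$; $\rho$-weakly convex: $g+\frac\rho2\|\cdot\|^2$ convex. $\operatorname{prox}_{\gamma g}(x)=\operatorname{argmin}_z\{g(z)+\frac1{2\gamma}\|z-x\|^2\}$, $T_\gamma(x)=\operatorname{prox}_{\gamma g}(x-\gamma\nabla f(x))$, $R_\gamma(x)=\gamma^{-1}(x-T_\gamma(x))$. Forward-backward envelope $\varphi_\gamma(x)=\inf_u\{f(x)+\langle\nabla f(x),u-x\rangle+g(u)+\frac1{2\gamma}\|u-x\|^2\}$. $\partial_C$: Clarke generalized Jacobian. PGCL: given $x^0$, $\gamma\in(0,\min\{1/L_f,\gamma_g\})$,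 $\sigma\in(0,\gamma\frac{1-\gamma L_f}{2})$, $\beta\in(0,1)$, $\mu\in(0,1)$; for $k=0,1,\dots$: select $\bar x^k\in T_\gamma(x^k)$, $r^k=\gamma^{-1}(x^k-\bar x^k)$; select $\bar r^k\in R_\gamma(\bar x^k)$, $Q_k\in I-\gamma\partial_C(\nabla f)(\bar x^k)$, $P_k\in\partial_C\operatorname{prox}_{\gamma g}(\bar x^k-\gamma\nabla f(\bar x^k))$; $B_k=\gamma^{-1}Q_k(I-P_kQ_k)$; stop if $\bar r^k=0$ and $\lambda_{\min}(B_k)\ge0$; select $d^k,s^k$ with $\langle Q_k\bar r^k,d^k\rangle\le0$, $\langle Q_k\bar r^k,s^k\rangle\le0$, and $\langle B_ks^k,s^k\rangle<0$ if $\lambda_{\min}(B_k)<0$, $=0$ otherwise; let $\tau_k$ be the largest element of $\{\beta^m:m\in\mathbb N\}$ such that $x^{k+1}=\bar x^k+\tau_k^2d^k+\tau_ks^k$ satisfies $\varphi_\gamma(x^{k+1})\le\varphi_\gamma(x^k)-\sigma\|r^k\|^2+\frac\mu2\tau_k^2\langle B_ks^k,s^k\rangle$. *)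

theory Defs
  imports "HOL-Analysis.Analysis"
begin

type_synonym 'n vec = "real ^ 'n"

definition lsc :: "('a::topological_space \<Rightarrow> ereal) \<Rightarrow> bool" where
  "lsc g \<longleftrightarrow> (\<forall>x. g x \<le> Liminf (at x) g)"

definition proper_fun :: "('a \<Rightarrow> ereal) \<Rightarrow> bool" where
  "proper_fun g \<longleftrightarrow> (\<forall>x. g x \<noteq> -\<infinity>) \<and> (\<exists>x. g x \<noteq> \<infinity>)"

definition prox_bounded :: "real \<Rightarrow> ('a::real_normed_vector \<Rightarrow> ereal) \<Rightarrow> bool" where
  "prox_bounded \<gamma>g g \<longleftrightarrow>
     (\<forall>\<gamma>. 0 < \<gamma> \<and> \<gamma> < \<gamma>g \<longrightarrow> (\<exists>c::real. \<forall>x. ereal c \<le> g x + ereal (norm x ^ 2 / (2 * \<gamma>))))"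

definition convex_ereal :: "('a::real_vector \<Rightarrow> ereal) \<Rightarrow> bool" where
  "convex_ereal h \<longleftrightarrow> (\<forall>x y t. 0 \<le> t \<and> t \<le> 1 \<longrightarrow>
      h ((1 - t) *\<^sub>R x + t *\<^sub>R y) \<le> ereal (1 - t) * h x + ereal t * h y)"

definition weakly_convex :: "real \<Rightarrow> ('a::real_normed_vector \<Rightarrow> ereal) \<Rightarrow> bool" where
  "weakly_convex \<rho> g \<longleftrightarrow> convex_ereal (\<lambda>x. g x + ereal (\<rho> / 2 * norm x ^ 2))"

definition prox :: "('a::real_normed_vector \<Rightarrow> ereal) \<Rightarrow> real \<Rightarrow> 'a \<Rightarrow> 'a set" where
  "prox g \<gamma> x = {z. \<forall>u. g z + ereal (norm (z - x) ^ 2 / (2 * \<gamma>)) \<le> g u + ereal (norm (u - x) ^ 2 / (2 * \<gamma>))}"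

text \<open>The proximal mapping viewed as a function (meaningful where prox is single-valued).\<close>
definition prox_fun :: "('a::real_normed_vector \<Rightarrow> ereal) \<Rightarrow> real \<Rightarrow> 'a \<Rightarrow> 'a" where
  "prox_fun g \<gamma> x = (THE z. z \<in> prox g \<gamma> x)"

definition FB :: "('a::real_inner \<Rightarrow> 'a) \<Rightarrow> ('a \<Rightarrow> ereal) \<Rightarrow> real \<Rightarrow> 'a \<Rightarrow> 'a set" where
  "FB gradf g \<gamma> x = prox g \<gamma> (x - \<gamma> *\<^sub>R gradf x)"

definition FBres :: "('a::real_inner \<Rightarrow> 'a) \<Rightarrow> ('a \<Rightarrow> ereal) \<Rightarrow> real \<Rightarrow> 'a \<Rightarrow> 'a set" where
  "FBres gradf g \<gamma> x = (\<lambda>z. (1 / \<gamma>) *\<^sub>R (x - z)) ` FB gradf g \<gamma> x"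

definition fixpts :: "('a \<Rightarrow> 'a set) \<Rightarrow> 'a set" where
  "fixpts T = {x. x \<in> T x}"

definition FBE :: "('a::real_inner \<Rightarrow> real) \<Rightarrow> ('a \<Rightarrow> 'a) \<Rightarrow> ('a \<Rightarrow> ereal) \<Rightarrow> real \<Rightarrow> 'a \<Rightarrow> ereal" where
  "FBE f gradf g \<gamma> x = (INF u. ereal (f x + gradf x \<bullet> (u - x) + norm (u - x) ^ 2 / (2 * \<gamma>)) + g u)"

definition clarke_jac :: "('n vec \<Rightarrow> 'm vec) \<Rightarrow> 'n vec \<Rightarrow> (real ^ 'n ^ 'm) set" where
  "clarke_jac F x = convex hull {A. \<exists>y. (\<forall>k. F differentiable (at (y k))) \<and> y \<longlonglongrightarrow> x \<and>
                                        (\<lambda>k. jacobian F (at (y k))) \<longlonglongrightarrow> A}"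

definition lambda_min :: "real ^ 'n ^ 'n \<Rightarrow> real" where
  "lambda_min B = Inf {e. \<exists>v. v \<noteq> 0 \<and> B *v v = e *\<^sub>R v}"

definition limit_points :: "(nat \<Rightarrow> 'a::topological_space) \<Rightarrow> 'a set" where
  "limit_points X = {a. \<exists>h. strict_mono h \<and> (X \<circ> h) \<longlonglongrightarrow> a}"

end

theory Submission
  imports Defs
begin

lemma line_deriv:
  fixes f :: "'a::real_inner \<Rightarrow> real"
  assumes fg: "\<And>z. (f has_derivative (\<lambda>h. gradf z \<bullet> h)) (at z)"
  shows "((\<lambda>t. f (x + t *\<^sub>R v)) has_real_derivative (gradf (x + t *\<^sub>R v) \<bullet> v)) (at t)"
proof -
  have l: "((\<lambda>t. x + t *\<^sub>R v) has_derivative (\<lambda>s. s *\<^sub>R v)) (at t)"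
    by (auto intro!: derivative_eq_intros)
  have "((\<lambda>t. f (x + t *\<^sub>R v)) has_derivative (\<lambda>s. gradf (x + t *\<^sub>R v) \<bullet> (s *\<^sub>R v))) (at t)"
    using diff_chain_at[OF l fg[of "x + t *\<^sub>R v"]] by (simp add: o_def)
  then show ?thesis
    by (simp add: has_field_derivative_def mult_commute_abs)
qed

lemma descent:
  fixes f :: "'a::real_inner \<Rightarrow> real"
  assumes fg: "\<And>z. (f has_derivative (\<lambda>h. gradf z \<bullet> h)) (at z)"
    and lip: "\<And>u v. norm (gradf u - gradf v) \<le> L * norm (u - v)"
  shows "f y \<le> f x + gradf x \<bullet> (y - x) + L / 2 * norm (y - x) ^ 2"
    and "f x + gradf x \<bullet> (y - x) - L / 2 * norm (y - x) ^ 2 \<le> f y"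
proof -
  define v where "v = y - x"
  have key: "\<bar>(gradf (x + t *\<^sub>R v) - gradf x) \<bullet> v\<bar> \<le> L * t * norm v ^ 2" if "0 \<le> t" for t
  proof -
    have "\<bar>(gradf (x + t *\<^sub>R v) - gradf x) \<bullet> v\<bar> \<le> norm (gradf (x + t *\<^sub>R v) - gradf x) * norm v"
      by (rule Cauchy_Schwarz_ineq2)
    also have "\<dots> \<le> L * norm (t *\<^sub>R v) * norm v"
      using lip[of "x + t *\<^sub>R v" x] by (simp add: mult_right_mono)
    also have "\<dots> = L * t * norm v ^ 2" using that by (simp add: power2_eq_square)
    finally show ?thesis .
  qed
  have dG: "((\<lambda>t. f (x + t *\<^sub>R v) - t * (gradf x \<bullet> v) + c * t^2 * norm v ^ 2) has_real_derivative
      (gradf (x + t *\<^sub>R v) \<bullet> v - gradf x \<bullet> v + c * (2 * t) * norm v ^ 2)) (at t)" for t c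
    by (rule derivative_eq_intros line_deriv[OF fg] refl | simp)+
  define G where "G t = f (x + t *\<^sub>R v) - t * (gradf x \<bullet> v) + (- L / 2) * t^2 * norm v ^ 2" for t
  have "G 1 \<le> G 0"
  proof (rule DERIV_nonpos_imp_nonincreasing[of 0 1 G])
    fix t :: real assume t: "0 \<le> t" "t \<le> 1"
    show "\<exists>y. (G has_real_derivative y) (at t) \<and> y \<le> 0"
      unfolding G_def[abs_def]
      apply (rule exI, rule conjI, rule dG)
      using key[OF t(1)] by (simp add: inner_diff_left algebra_simps)
  qed simp
  then show "f y \<le> f x + gradf x \<bullet> (y - x) + L / 2 * norm (y - x) ^ 2"
    by (simp add: G_def v_def)
  define H where "H t = f (x + t *\<^sub>R v) - t * (gradf x \<bullet> v) + L / 2 * t^2 * norm v ^ 2" for t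
  have "H 0 \<le> H 1"
  proof (rule DERIV_nonneg_imp_nondecreasing[of 0 1 H])
    fix t :: real assume t: "0 \<le> t" "t \<le> 1"
    show "\<exists>y. (H has_real_derivative y) (at t) \<and> 0 \<le> y"
      unfolding H_def[abs_def]
      apply (rule exI, rule conjI, rule dG)
      using key[OF t(1)] by (simp add: inner_diff_left algebra_simps)
  qed simp
  then show "f x + gradf x \<bullet> (y - x) - L / 2 * norm (y - x) ^ 2 \<le> f y"
    by (simp add: H_def v_def)
qed

lemma prox_finite:
  assumes "proper_fun g" "z \<in> prox g \<gamma> y"
  shows "\<bar>g z\<bar> \<noteq> \<infinity>"
proof -
  obtain u0 where u0: "g u0 \<noteq> \<infinity>" using assms(1) unfolding proper_fun_def by blast
  have "g z + ereal (norm (z - y) ^ 2 / (2 * \<gamma>)) \<le> g u0 + ereal (norm (u0 - y) ^ 2 / (2 * \<gamma>))"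
    using assms(2) unfolding prox_def by blast
  moreover have "g u0 + ereal (norm (u0 - y) ^ 2 / (2 * \<gamma>)) < \<infinity>" using u0 by simp
  ultimately have "g z \<noteq> \<infinity>" by auto
  moreover have "g z \<noteq> -\<infinity>" using assms(1) unfolding proper_fun_def by blast
  ultimately show ?thesis by auto
qed

lemma norm_shift_identity:
  fixes u x w :: "'a::real_inner"
  assumes "\<gamma> > 0"
  shows "norm (u - (x - \<gamma> *\<^sub>R w)) ^ 2 / (2 * \<gamma>) =
         norm (u - x) ^ 2 / (2 * \<gamma>) + w \<bullet> (u - x) + \<gamma> / 2 * norm w ^ 2"
proof -
  have e1: "u - (x - \<gamma> *\<^sub>R w) = (u - x) + \<gamma> *\<^sub>R w" by (simp add: algebra_simps)
  have e2: "norm (a + \<gamma> *\<^sub>R w) ^ 2 = norm a ^ 2 + 2 * \<gamma> * (w \<bullet> a) + \<gamma>^2 * norm w ^ 2" for a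
  proof -
    have "norm (a + \<gamma> *\<^sub>R w) ^ 2 = (a + \<gamma> *\<^sub>R w) \<bullet> (a + \<gamma> *\<^sub>R w)" by (rule power2_norm_eq_inner)
    also have "\<dots> = a \<bullet> a + 2 * \<gamma> * (w \<bullet> a) + \<gamma>^2 * (w \<bullet> w)"
      by (simp add: inner_add_left inner_add_right inner_commute algebra_simps power2_eq_square)
    finally show ?thesis by (simp add: power2_norm_eq_inner)
  qed
  have "norm (u - (x - \<gamma> *\<^sub>R w)) ^ 2 = norm (u - x) ^ 2 + 2 * \<gamma> * (w \<bullet> (u - x)) + \<gamma>^2 * norm w ^ 2"
    by (subst e1) (rule e2)
  then show ?thesis using assms by (simp add: field_simps power2_eq_square)
qed

lemma FBE_at:
  assumes g: "\<gamma> > 0" and xb: "xb \<in> FB gradf g \<gamma> x"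
  shows "FBE f gradf g \<gamma> x = ereal (f x + gradf x \<bullet> (xb - x) + norm (xb - x) ^ 2 / (2 * \<gamma>)) + g xb"
proof -
  define y where "y = x - \<gamma> *\<^sub>R gradf x"
  define K where "K = f x - \<gamma> / 2 * norm (gradf x) ^ 2"
  have T: "ereal (f x + gradf x \<bullet> (u - x) + norm (u - x) ^ 2 / (2 * \<gamma>)) + g u
        = ereal K + (g u + ereal (norm (u - y) ^ 2 / (2 * \<gamma>)))" for u
  proof -
    have "f x + gradf x \<bullet> (u - x) + norm (u - x) ^ 2 / (2 * \<gamma>) = K + norm (u - y) ^ 2 / (2 * \<gamma>)"
      unfolding K_def y_def using norm_shift_identity[OF g, of u x "gradf x"] by simp
    then show ?thesis by (cases "g u") simp_all
  qed
  have P: "g xb + ereal (norm (xb - y) ^ 2 / (2 * \<gamma>)) \<le> g u + ereal (norm (u - y) ^ 2 / (2 * \<gamma>))" for u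
    using xb unfolding FB_def prox_def y_def by blast
  show ?thesis
    unfolding FBE_def
  proof (rule antisym)
    show "(INF u. ereal (f x + gradf x \<bullet> (u - x) + norm (u - x) ^ 2 / (2 * \<gamma>)) + g u)
        \<le> ereal (f x + gradf x \<bullet> (xb - x) + norm (xb - x) ^ 2 / (2 * \<gamma>)) + g xb"
      by (rule INF_lower) simp
    show "ereal (f x + gradf x \<bullet> (xb - x) + norm (xb - x) ^ 2 / (2 * \<gamma>)) + g xb
        \<le> (INF u. ereal (f x + gradf x \<bullet> (u - x) + norm (u - x) ^ 2 / (2 * \<gamma>)) + g u)"
      unfolding T by (rule INF_greatest) (use P in \<open>auto intro: add_left_mono\<close>)
  qed
qed

lemma lsc_seq:
  fixes g :: "'a::metric_space \<Rightarrow> ereal"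
  assumes "lsc g" "z \<longlonglongrightarrow> a" "c < g a"
  shows "eventually (\<lambda>j. c < g (z j)) sequentially"
proof -
  have "c < Liminf (at a) g" using assms(1,3) unfolding lsc_def using less_le_trans by blast
  then have "eventually (\<lambda>y. c < g y) (at a)" by (rule less_LiminfD)
  then obtain d where d: "d > 0" "\<And>y. y \<noteq> a \<Longrightarrow> dist y a < d \<Longrightarrow> c < g y"
    unfolding eventually_at by blast
  have "eventually (\<lambda>j. dist (z j) a < d) sequentially"
    using assms(2) d(1) by (rule tendstoD)
  then show ?thesis
    by eventually_elim (use d(2) assms(3) in \<open>metis\<close>)
qed

lemma prox_closed:
  assumes lsc: "lsc g" and nm: "\<And>x. g x \<noteq> -\<infinity>" and gp: "\<gamma> > 0"
    and zin: "\<And>j. z j \<in> prox g \<gamma> (y j)" and za: "z \<longlonglongrightarrow> a" and yb: "y \<longlonglongrightarrow> b"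
  shows "a \<in> prox g \<gamma> b"
  unfolding prox_def
proof (safe)
  fix u
  show "g a + ereal (norm (a - b) ^ 2 / (2 * \<gamma>)) \<le> g u + ereal (norm (u - b) ^ 2 / (2 * \<gamma>))"
  proof (cases "g u")
    case PInf then show ?thesis by simp
  next
    case MInf then show ?thesis using nm by blast
  next
    case (real G)
    define E where "E = G + norm (u - b) ^ 2 / (2 * \<gamma>) - norm (a - b) ^ 2 / (2 * \<gamma>)"
    define e where "e j = G + norm (u - y j) ^ 2 / (2 * \<gamma>) - norm (z j - y j) ^ 2 / (2 * \<gamma>)" for j
    have eE: "e \<longlonglongrightarrow> E" unfolding e_def E_def
      using gp by (auto intro!: tendsto_intros za yb)
    have ge: "g (z j) \<le> ereal (e j)" for j
    proof -
      have "g (z j) + ereal (norm (z j - y j) ^ 2 / (2 * \<gamma>)) \<le> g u + ereal (norm (u - y j) ^ 2 / (2 * \<gamma>))"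
        using zin[of j] unfolding prox_def by blast
      then show ?thesis using nm[of "z j"] real unfolding e_def
        by (cases "g (z j)") auto
    qed
    have "g a \<le> ereal E"
    proof (rule ccontr)
      assume "\<not> g a \<le> ereal E"
      then have "ereal E < g a" by simp
      then obtain c where c: "ereal E < c" "c < g a" using dense by blast
      then obtain c' where c': "c = ereal c'" by (cases c) auto
      have ev1: "eventually (\<lambda>j. c < g (z j)) sequentially" using lsc_seq[OF lsc za c(2)] .
      have "E < c'" using c c' by simp
      then have ev2: "eventually (\<lambda>j. e j < c') sequentially" by (rule order_tendstoD(2)[OF eE])
      from ev1 ev2 have "eventually (\<lambda>j. False) sequentially"
      proof eventually_elim
        case (elim j)
        have "ereal (e j) < c" using elim(2) c' by simp
        with ge[of j] have "g (z j) < c" by (rule le_less_trans)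
        with elim(1) show False by simp
      qed
      then show False by simp
    qed
    then have "g a + ereal (norm (a - b) ^ 2 / (2 * \<gamma>)) \<le> ereal E + ereal (norm (a - b) ^ 2 / (2 * \<gamma>))"
      by (rule add_right_mono)
    also have "\<dots> = g u + ereal (norm (u - b) ^ 2 / (2 * \<gamma>))" using real gp unfolding E_def by simp
    finally show ?thesis .
  qed
qed

theorem proposition5p2:
  fixes f :: "real ^ 'n \<Rightarrow> real" and gradf :: "real ^ 'n \<Rightarrow> real ^ 'n"
    and g :: "real ^ 'n \<Rightarrow> ereal"
    and Lf \<gamma>g \<rho> \<gamma> \<sigma> \<beta> \<mu> :: real
    and x xb r rb d s :: "nat \<Rightarrow> real ^ 'n"
    and Q P :: "nat \<Rightarrow> real ^ 'n ^ 'n"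
    and m :: "nat \<Rightarrow> nat"
  assumes f_grad: "\<And>z. (f has_derivative (\<lambda>h. gradf z \<bullet> h)) (at z)"
    and Lf_nonneg: "0 \<le> Lf"
    and grad_lip: "\<And>u v. norm (gradf u - gradf v) \<le> Lf * norm (u - v)"
    and g_proper: "proper_fun g" and g_lsc: "lsc g"
    and \<gamma>g_pos: "0 < \<gamma>g" and g_pb: "prox_bounded \<gamma>g g"
    and \<rho>_nonneg: "0 \<le> \<rho>" and g_wc: "weakly_convex \<rho> g"
    and argmin_ne: "\<exists>z. \<forall>u. ereal (f z) + g z \<le> ereal (f u) + g u"
    and \<gamma>_pos: "0 < \<gamma>" and \<gamma>_lt_\<gamma>g: "\<gamma> < \<gamma>g" and \<gamma>_Lf: "\<gamma> * Lf < 1"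
    and \<sigma>_pos: "0 < \<sigma>" and \<sigma>_lt: "\<sigma> < \<gamma> * (1 - \<gamma> * Lf) / 2"
    and \<beta>: "0 < \<beta>" "\<beta> < 1" and \<mu>: "0 < \<mu>" "\<mu> < 1"
    and xb_sel: "\<And>k. xb k \<in> FB gradf g \<gamma> (x k)"
    and r_def: "\<And>k. r k = (1 / \<gamma>) *\<^sub>R (x k - xb k)"
    and rb_sel: "\<And>k. rb k \<in> FBres gradf g \<gamma> (xb k)"
    and Q_sel: "\<And>k. Q k \<in> (\<lambda>J. mat 1 - \<gamma> *\<^sub>R J) ` clarke_jac gradf (xb k)"
    and P_sel: "\<And>k. P k \<in> clarke_jac (prox_fun g \<gamma>) (xb k - \<gamma> *\<^sub>R gradf (xb k))"
    and no_stop: "\<And>k. \<not> (rb k = 0 \<and>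
                     lambda_min ((1 / \<gamma>) *\<^sub>R (Q k ** (mat 1 - P k ** Q k))) \<ge> 0)"
    and d_dir: "\<And>k. (Q k *v rb k) \<bullet> d k \<le> 0"
    and s_dir: "\<And>k. (Q k *v rb k) \<bullet> s k \<le> 0"
    and s_curv: "\<And>k. let B = (1 / \<gamma>) *\<^sub>R (Q k ** (mat 1 - P k ** Q k)) in
                   (if lambda_min B < 0 then (B *v s k) \<bullet> s k < 0 else (B *v s k) \<bullet> s k = 0)"
    and x_next: "\<And>k. x (Suc k) = xb k + (\<beta> ^ m k) ^ 2 *\<^sub>R d k + \<beta> ^ m k *\<^sub>R s k"
    and ls_accept: "\<And>k. let B = (1 / \<gamma>) *\<^sub>R (Q k ** (mat 1 - P k ** Q k)) in
                   FBE f gradf g \<gamma> (x (Suc k)) \<le> FBE f gradf g \<gamma> (x k)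
                     + ereal (- \<sigma> * norm (r k) ^ 2 + \<mu> / 2 * (\<beta> ^ m k) ^ 2 * ((B *v s k) \<bullet> s k))"
    and ls_largest: "\<And>k j. j < m k \<Longrightarrow> (let B = (1 / \<gamma>) *\<^sub>R (Q k ** (mat 1 - P k ** Q k)) in
                   \<not> (FBE f gradf g \<gamma> (xb k + (\<beta> ^ j) ^ 2 *\<^sub>R d k + \<beta> ^ j *\<^sub>R s k) \<le> FBE f gradf g \<gamma> (x k)
                     + ereal (- \<sigma> * norm (r k) ^ 2 + \<mu> / 2 * (\<beta> ^ j) ^ 2 * ((B *v s k) \<bullet> s k))))"
  shows "r \<longlonglongrightarrow> 0 \<and> summable (\<lambda>k. norm (r k) ^ 2)
         \<and> limit_points x = limit_points xb
         \<and> limit_points xb \<subseteq> fixpts (FB gradf g \<gamma>)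
         \<and> (\<exists>\<phi>s::real. (\<lambda>k. FBE f gradf g \<gamma> (x k)) \<longlonglongrightarrow> ereal \<phi>s
              \<and> (bounded (range x) \<longrightarrow> (\<lambda>k. ereal (f (xb k)) + g (xb k)) \<longlonglongrightarrow> ereal \<phi>s))"
  proof -
  have g_nm: "\<And>u. g u \<noteq> -\<infinity>" using g_proper unfolding proper_fun_def by blast
  have gfin: "\<bar>g (xb k)\<bar> \<noteq> \<infinity>" for k
    using xb_sel[of k] unfolding FB_def by (rule prox_finite[OF g_proper])
  define v where "v k = f (x k) + gradf (x k) \<bullet> (xb k - x k) + norm (xb k - x k) ^ 2 / (2 * \<gamma>)
      + real_of_ereal (g (xb k))" for k
  have FBE_v: "FBE f gradf g \<gamma> (x k) = ereal (v k)" for k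
  proof -
    have "g (xb k) = ereal (real_of_ereal (g (xb k)))" using gfin[of k] by (simp add: ereal_real')
    then show ?thesis unfolding FBE_at[OF \<gamma>_pos xb_sel[of k]] v_def
      by (metis plus_ereal.simps(1))
  qed
  have phi_xb: "ereal (f (xb k)) + g (xb k) = ereal (f (xb k) + real_of_ereal (g (xb k)))" for k
    using gfin[of k] by (cases "g (xb k)") auto
  have Bss: "((1 / \<gamma>) *\<^sub>R (Q k ** (mat 1 - P k ** Q k)) *v s k) \<bullet> s k \<le> 0" for k
    using s_curv[of k] unfolding Let_def by (auto split: if_splits)
  have dec: "v (Suc k) \<le> v k - \<sigma> * norm (r k) ^ 2" for k
  proof -
    define b where "b = ((1 / \<gamma>) *\<^sub>R (Q k ** (mat 1 - P k ** Q k)) *v s k) \<bullet> s k"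
    have "ereal (v (Suc k)) \<le> ereal (v k) + ereal (- \<sigma> * norm (r k) ^ 2 + \<mu> / 2 * (\<beta> ^ m k) ^ 2 * b)"
      using ls_accept[of k] unfolding Let_def FBE_v b_def .
    then have "v (Suc k) \<le> v k + (- \<sigma> * norm (r k) ^ 2 + \<mu> / 2 * (\<beta> ^ m k) ^ 2 * b)" by simp
    moreover have "\<mu> / 2 * (\<beta> ^ m k) ^ 2 * b \<le> 0"
      using Bss[of k] \<mu> unfolding b_def by (intro mult_nonneg_nonpos) auto
    ultimately show ?thesis by simp
  qed
  have Lg: "Lf / 2 \<le> 1 / (2 * \<gamma>)" using \<gamma>_Lf \<gamma>_pos by (simp add: field_simps)
  have up: "f (xb k) + real_of_ereal (g (xb k)) \<le> v k" for k
  proof -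
    have "f (xb k) \<le> f (x k) + gradf (x k) \<bullet> (xb k - x k) + Lf / 2 * norm (xb k - x k) ^ 2"
      by (rule descent(1)[OF f_grad grad_lip])
    moreover have "Lf / 2 * norm (xb k - x k) ^ 2 \<le> norm (xb k - x k) ^ 2 / (2 * \<gamma>)"
      using mult_right_mono[OF Lg, of "norm (xb k - x k) ^ 2"] by simp
    ultimately show ?thesis unfolding v_def by simp
  qed
  have low: "v k - (1 / (2 * \<gamma>) + Lf / 2) * norm (xb k - x k) ^ 2 \<le> f (xb k) + real_of_ereal (g (xb k))" for k
  proof -
    have "f (x k) + gradf (x k) \<bullet> (xb k - x k) - Lf / 2 * norm (xb k - x k) ^ 2 \<le> f (xb k)"
      by (rule descent(2)[OF f_grad grad_lip])
    then show ?thesis unfolding v_def by (simp add: algebra_simps)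
  qed
  obtain z where z: "\<And>u. ereal (f z) + g z \<le> ereal (f u) + g u" using argmin_ne by blast
  obtain u0 where u0: "g u0 \<noteq> \<infinity>" using g_proper unfolding proper_fun_def by blast
  have gz: "\<bar>g z\<bar> \<noteq> \<infinity>"
  proof -
    have "ereal (f z) + g z \<le> ereal (f u0) + g u0" by (rule z)
    moreover have "ereal (f u0) + g u0 < \<infinity>" using u0 by simp
    ultimately have "g z \<noteq> \<infinity>" by auto
    then show ?thesis using g_nm[of z] by auto
  qed
  define pstar where "pstar = f z + real_of_ereal (g z)"
  have vlow: "pstar \<le> v k" for k
  proof -
    have "ereal pstar \<le> ereal (f (xb k) + real_of_ereal (g (xb k)))"
      using z[of "xb k"] gz unfolding pstar_def phi_xb[symmetric] by (cases "g z") auto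
    then show ?thesis using up[of k] by simp
  qed
  have rnn: "0 \<le> \<sigma> * norm (r k) ^ 2" for k using \<sigma>_pos by simp
  have vdec: "decseq v"
  proof (rule decseq_SucI)
    fix k show "v (Suc k) \<le> v k" using dec[of k] rnn[of k] by linarith
  qed
  obtain phis where phis: "v \<longlonglongrightarrow> phis" using decseq_convergent[OF vdec, of pstar] vlow by blast
  have sumb: "\<sigma> * (\<Sum>k<n. norm (r k) ^ 2) \<le> v 0 - v n" for n
  proof (induction n)
    case 0 then show ?case by simp
  next
    case (Suc n) then show ?case using dec[of n] by (simp add: algebra_simps)
  qed
  have summ: "summable (\<lambda>k. norm (r k) ^ 2)"
  proof (rule summableI_nonneg_bounded)
    fix n
    have "\<sigma> * (\<Sum>k<n. norm (r k) ^ 2) \<le> v 0 - pstar" using sumb[of n] vlow[of n] by simp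
    then show "(\<Sum>k<n. norm (r k) ^ 2) \<le> (v 0 - pstar) / \<sigma>" using \<sigma>_pos by (simp add: field_simps)
  qed simp
  have r2: "(\<lambda>k. norm (r k) ^ 2) \<longlonglongrightarrow> 0" using summable_LIMSEQ_zero[OF summ] .
  have "(\<lambda>k. sqrt (norm (r k) ^ 2)) \<longlonglongrightarrow> sqrt 0" by (rule tendsto_real_sqrt[OF r2])
  then have "(\<lambda>k. norm (r k)) \<longlonglongrightarrow> 0" by simp
  then have r0: "r \<longlonglongrightarrow> 0" by (simp add: tendsto_norm_zero_iff)
  have xd: "x k - xb k = \<gamma> *\<^sub>R r k" for k using r_def[of k] \<gamma>_pos by simp
  have d0: "(\<lambda>k. x k - xb k) \<longlonglongrightarrow> 0" unfolding xd using tendsto_scaleR[OF tendsto_const r0, of \<gamma>] by simp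
  have lp1: "limit_points x \<subseteq> limit_points xb"
  proof
    fix a assume "a \<in> limit_points x"
    then obtain h where h: "strict_mono h" "(x \<circ> h) \<longlonglongrightarrow> a" unfolding limit_points_def by blast
    have "(\<lambda>j. x (h j) - xb (h j)) \<longlonglongrightarrow> 0" using LIMSEQ_subseq_LIMSEQ[OF d0 h(1)] by (simp add: o_def)
    then have "(\<lambda>j. x (h j) - (x (h j) - xb (h j))) \<longlonglongrightarrow> a - 0" using h(2) by (intro tendsto_diff) (auto simp: o_def)
    then have "(xb \<circ> h) \<longlonglongrightarrow> a" by (simp add: o_def)
    then show "a \<in> limit_points xb" using h(1) unfolding limit_points_def by blast
  qed
  have xlim: "(x \<circ> h) \<longlonglongrightarrow> a" if h: "strict_mono h" "(xb \<circ> h) \<longlonglongrightarrow> a" for h a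
  proof -
    have "(\<lambda>j. x (h j) - xb (h j)) \<longlonglongrightarrow> 0" using LIMSEQ_subseq_LIMSEQ[OF d0 h(1)] by (simp add: o_def)
    then have "(\<lambda>j. xb (h j) + (x (h j) - xb (h j))) \<longlonglongrightarrow> a + 0" using h(2) by (intro tendsto_add) (auto simp: o_def)
    then show "(x \<circ> h) \<longlonglongrightarrow> a" by (simp add: o_def)
  qed
  have lp2: "limit_points xb \<subseteq> limit_points x"
    using xlim unfolding limit_points_def by blast
  have gcont: "continuous_on UNIV gradf"
    by (rule lipschitz_on_continuous_on[of Lf]) (auto intro!: lipschitz_onI simp: dist_norm grad_lip Lf_nonneg)
  have fixp: "limit_points xb \<subseteq> fixpts (FB gradf g \<gamma>)"
  proof
    fix a assume "a \<in> limit_points xb"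
    then obtain h where h: "strict_mono h" "(xb \<circ> h) \<longlonglongrightarrow> a" unfolding limit_points_def by blast
    have xa: "(x \<circ> h) \<longlonglongrightarrow> a" by (rule xlim[OF h])
    have ic: "isCont gradf a" using gcont by (simp add: continuous_on_eq_continuous_at)
    have xa': "(\<lambda>j. x (h j)) \<longlonglongrightarrow> a" using xa by (simp add: o_def)
    have ga: "(\<lambda>j. gradf (x (h j))) \<longlonglongrightarrow> gradf a" by (rule isCont_tendsto_compose[OF ic xa'])
    have ya: "(\<lambda>j. x (h j) - \<gamma> *\<^sub>R gradf (x (h j))) \<longlonglongrightarrow> a - \<gamma> *\<^sub>R gradf a"
      by (intro tendsto_intros xa' ga)
    have "a \<in> prox g \<gamma> (a - \<gamma> *\<^sub>R gradf a)"
      by (rule prox_closed[OF g_lsc g_nm \<gamma>_pos _ h(2) ya]) (use xb_sel in \<open>simp add: FB_def\<close>)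
    then show "a \<in> fixpts (FB gradf g \<gamma>)" unfolding fixpts_def FB_def by simp
  qed
  have n2: "(\<lambda>k. norm (xb k - x k) ^ 2) \<longlonglongrightarrow> 0"
  proof -
    have "(\<lambda>k. norm (x k - xb k)) \<longlonglongrightarrow> 0" using d0 by (simp add: tendsto_norm_zero_iff)
    then have "(\<lambda>k. norm (x k - xb k) ^ 2) \<longlonglongrightarrow> 0 ^ 2" by (intro tendsto_intros)
    then show ?thesis by (simp add: norm_minus_commute)
  qed
  have phiconv: "(\<lambda>k. ereal (f (xb k)) + g (xb k)) \<longlonglongrightarrow> ereal phis"
  proof -
    have "(\<lambda>k. v k - (1 / (2 * \<gamma>) + Lf / 2) * norm (xb k - x k) ^ 2) \<longlonglongrightarrow> phis - (1 / (2 * \<gamma>) + Lf / 2) * 0"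
      by (intro tendsto_intros phis n2)
    then have lowlim: "(\<lambda>k. v k - (1 / (2 * \<gamma>) + Lf / 2) * norm (xb k - x k) ^ 2) \<longlonglongrightarrow> phis"
      by simp
    have "(\<lambda>k. f (xb k) + real_of_ereal (g (xb k))) \<longlonglongrightarrow> phis"
    proof (rule tendsto_sandwich[OF _ _ _ phis])
      show "\<forall>\<^sub>F k in sequentially. f (xb k) + real_of_ereal (g (xb k)) \<le> v k"
        using up by (intro always_eventually) blast
      show "\<forall>\<^sub>F k in sequentially. v k - (1 / (2 * \<gamma>) + Lf / 2) * norm (xb k - x k) ^ 2
          \<le> f (xb k) + real_of_ereal (g (xb k))"
        using low by (intro always_eventually) blast
    qed (rule lowlim)
    then show ?thesis unfolding phi_xb by (rule tendsto_ereal)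
  qed
  have FBEconv: "(\<lambda>k. FBE f gradf g \<gamma> (x k)) \<longlonglongrightarrow> ereal phis"
    unfolding FBE_v using phis by (rule tendsto_ereal)
  show ?thesis using r0 summ lp1 lp2 fixp FBEconv phiconv by blast
qed

end
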